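(* For all pure states $\rho,\omega\in\mathcal{P}_1(\mathbb{C}^2)$ one has $D_{\mathrm{sym}}^2(\rho,\omega)=6-2\langle\mathbf{b}_\rho,\mathbf{b}_\omega\rangle$, $D_{\mathrm{sym}}^2(\rho,\rho)=4$, and consequently $d_{\mathrm{sym}}(\rho,\omega)=|\mathbf{b}_\rho-\mathbf{b}_\omega|$, where $\langle\cdot,\cdot\rangle$ and $|\cdot|$ are the Euclidean inner product and norm on $\mathbb{R}^3$.
   Context: Let $\mathcal{H}=\mathbb{C}^2$, $\mathcal{H}^*$ its dual space. $\mathcal{S}(\mathcal{H})$ is the set of density operators on $\mathcal{H}$; $\mathcal{P}_1(\mathcal{H})$ is the set of pure states (rank-one orthogonal projections). For a linear operator $A$ on $\mathcal{H}$, its transpose $A^T$ is the operator on $\mathcal{H}^*$ defined by $(A^T\varphi)(x)=\varphi(Ax)$. For $\rho,\omega\in\mathcal{S}(\mathcal{H})$, $\mathcal{C}(\rho,\omega)=\{\Pi\in\mathcal{S}(\mathcal{H}\otimes\mathcal{H}^* ):\ \mathrm{tr}_{\mathcal{H}^*}[\Pi]=\omega,\ \mathrm{tr}_{\mathcal{H}}[\Pi]=\rho^T\}$. The Pauli matrices are $\sigma_1=\begin{bmatrix}0&1\\1&0\end{bmatrix}$, $\sigma_2=\begin{bmatrix}0&-i\\i&0\end{bmatrix}$, $\sigma_3=\begin{bmatrix}1&0\\0&-1\end{bmatrix}$. $C_{\mathrm{sym}}=\sum_{j=1}^3(\sigma_j\otimes I^T-I\otimes\sigma_j^T)^2$, $D_{\mathrm{sym}}^2(\rho,\omega)=\inf\{\mathrm{tr}[\Pi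 C_{\mathrm{sym}}]:\Pi\in\mathcal{C}(\rho,\omega)\}$, and $d_{\mathrm{sym}}(\rho,\omega)=\big(D_{\mathrm{sym}}^2(\rho,\omega)-\tfrac12(D_{\mathrm{sym}}^2(\rho,\rho)+D_{\mathrm{sym}}^2(\omega,\omega))\big)^{1/2}$. The Bloch vector of $\rho$ is $\mathbf{b}_\rho=(\mathrm{tr}[\sigma_j\rho])_{j=1}^3$. *)

theory Defs
  imports "HOL-Analysis.Analysis"
begin

text \<open>The dual space H* is identified with C^2 via the dual basis; then the
  transpose A^T (defined by (A^T phi)(x) = phi(A x)) has as matrix the
  ordinary matrix transpose.  Operators on H (x) H* are matrices indexed by
  the product type 2 x 2 (basis e_i (x) e_k^*).\<close>

type_synonym op2 = "complex^2^2"
type_synonym op4 = "complex^(2 \<times> 2)^(2 \<times> 2)"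

definition adj :: "complex^'n^'n \<Rightarrow> complex^'n^'n" where
  "adj A = (\<chi> i j. cnj (A $ j $ i))"

definition psd :: "complex^'n^'n \<Rightarrow> bool" where
  "psd A \<longleftrightarrow> (\<forall>v::complex^'n.
      let q = (\<Sum>i\<in>UNIV. \<Sum>j\<in>UNIV. cnj (v $ i) * A $ i $ j * v $ j)
      in Im q = 0 \<and> Re q \<ge> 0)"

definition density :: "complex^'n^'n \<Rightarrow> bool" where
  "density A \<longleftrightarrow> adj A = A \<and> psd A \<and> trace A = 1"

definition pure_state :: "op2 \<Rightarrow> bool" where
  "pure_state P \<longleftrightarrow> adj P = P \<and> P ** P = P \<and> rank P = 1"

definition kron :: "complex^'a^'a \<Rightarrow> complex^'b^'b \<Rightarrow> complex^('a \<times> 'b)^('a \<times> 'b)" where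
  "kron A B = (\<chi> p q. A $ fst p $ fst q * B $ snd p $ snd q)"

text \<open>Partial traces: over H* (second factor) and over H (first factor).\<close>
definition ptrace2 :: "op4 \<Rightarrow> op2" where
  "ptrace2 M = (\<chi> i j. \<Sum>k\<in>UNIV. M $ (i, k) $ (j, k))"

definition ptrace1 :: "op4 \<Rightarrow> op2" where
  "ptrace1 M = (\<chi> k l. \<Sum>i\<in>UNIV. M $ (i, k) $ (i, l))"

definition couplings :: "op2 \<Rightarrow> op2 \<Rightarrow> op4 set" where
  "couplings \<rho> \<omega> = {P. density P \<and> ptrace2 P = \<omega> \<and> ptrace1 P = transpose \<rho>}"

definition pauli :: "nat \<Rightarrow> op2" where
  "pauli j = (if j = 1 then (\<chi> i k. if i = k then 0 else 1)
              else if j = 2 then (\<chi> i k. if i = k then 0 else if i = 1 then - \<i> else \<i>)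
              else (\<chi> i k. if i \<noteq> k then 0 else if i = 1 then 1 else -1))"

definition Csym :: op4 where
  "Csym = (\<Sum>j\<in>{1,2,3::nat}.
      (let X = kron (pauli j) (transpose (mat 1)) - kron (mat 1) (transpose (pauli j)) in X ** X))"

definition Dsym2 :: "op2 \<Rightarrow> op2 \<Rightarrow> real" where
  "Dsym2 \<rho> \<omega> = Inf ((\<lambda>P. Re (trace (P ** Csym))) ` couplings \<rho> \<omega>)"

definition dsym :: "op2 \<Rightarrow> op2 \<Rightarrow> real" where
  "dsym \<rho> \<omega> = sqrt (Dsym2 \<rho> \<omega> - (Dsym2 \<rho> \<rho> + Dsym2 \<omega> \<omega>) / 2)"

definition bloch :: "op2 \<Rightarrow> real^3" where
  "bloch \<rho> = (\<chi> j. Re (trace (pauli (if j = 1 then 1 else if j = 2 then 2 else 3) ** \<rho>)))"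

end

theory Submission
  imports Defs
begin


lemma two_ne: "(1::2) \<noteq> 2" "(2::2) \<noteq> 1" by simp_all

lemma pair_cases: "(p::2\<times>2) = (1,1) \<or> p = (1,2) \<or> p = (2,1) \<or> p = (2,2)"
  by (metis exhaust_2 prod.collapse)

lemma sum_pairs: "sum f (UNIV::(2\<times>2) set) = f (1,1) + f (1,2) + f (2,1) + f (2,2)"
proof -
  have U: "(UNIV::(2\<times>2) set) = {(1,1),(1,2),(2,1),(2,2)}"
    using pair_cases by auto
  show ?thesis unfolding U by (simp add: two_ne add.assoc)
qed


lemma pauli_entries:
  "pauli 1 $ 1 $ 1 = 0" "pauli 1 $ 1 $ 2 = 1" "pauli 1 $ 2 $ 1 = 1" "pauli 1 $ 2 $ 2 = 0"
  "pauli 2 $ 1 $ 1 = 0" "pauli 2 $ 1 $ 2 = -\<i>" "pauli 2 $ 2 $ 1 = \<i>" "pauli 2 $ 2 $ 2 = 0"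
  "pauli 3 $ 1 $ 1 = 1" "pauli 3 $ 1 $ 2 = 0" "pauli 3 $ 2 $ 1 = 0" "pauli 3 $ 2 $ 2 = -1"
  by (simp_all add: pauli_def)

definition Xm :: "nat \<Rightarrow> op4" where
  "Xm j = kron (pauli j) (transpose (mat 1)) - kron (mat 1) (transpose (pauli j))"

lemma Xm_entry: "Xm j $ p $ q = pauli j $ fst p $ fst q * (if snd p = snd q then 1 else 0)
   - (if fst p = fst q then 1 else 0) * pauli j $ snd q $ snd p"
  by (simp add: Xm_def kron_def transpose_def mat_def)

lemma Csym_Xm: "Csym = Xm 1 ** Xm 1 + Xm 2 ** Xm 2 + Xm 3 ** Xm 3"
  unfolding Csym_def Xm_def by (simp add: Let_def)


definition Fm :: op4 where "Fm = (\<chi> p q. if fst p = snd p \<and> fst q = snd q then 1 else 0)"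

lemma XX_entry: "(Xm j ** Xm j) $ p $ q = (\<Sum>r\<in>UNIV. Xm j $ p $ r * Xm j $ r $ q)"
  by (simp add: matrix_matrix_mult_def)

lemma Csym_explicit: "Csym $ p $ q = (if p = q then 8 else 0) - 4 * Fm $ p $ q"
  using pair_cases[of p] pair_cases[of q]
  apply (simp only: Csym_Xm vector_add_component XX_entry sum_pairs Xm_entry)
  apply (elim disjE)
  apply (simp_all add: pauli_def Fm_def)
  done


definition outer :: "complex^'n \<Rightarrow> complex^'n^'n" where
  "outer u = (\<chi> i j. u$i * cnj (u$j))"

lemma rank0: "rank (0::complex^2^2) = 0"
  unfolding row_rank_def_gen by (auto simp add: rows_def row_def vec_eq_iff)

lemma rankI: "rank (mat 1::complex^2^2) = 2"
proof -
  have "rows (mat 1::complex^2^2) = cart_basis"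
    unfolding rows_def row_def cart_basis_def
    by (auto simp: mat_def axis_def vec_eq_iff)
  then have "rank (mat 1::complex^2^2) = vec.dim (UNIV::(complex^2) set)" unfolding row_rank_def_gen
    by (metis vec.dim_span span_cart_basis)
  then show ?thesis using vec_dim_card[where 'n=2 and 'a=complex] by simp
qed

lemma mat2_eqI: "(\<And>i j. i \<in> {1,2} \<Longrightarrow> j \<in> {1,2} \<Longrightarrow> A $ i $ j = B $ i $ j) \<Longrightarrow> A = (B::complex^2^2)"
  unfolding vec_eq_iff using exhaust_2 by blast

lemma herm_entry: "adj A = A \<Longrightarrow> A $ i $ j = cnj (A $ j $ i)"
proof -
  assume "adj A = A"
  then have "adj A $ i $ j = A $ i $ j" by simp
  then show ?thesis by (simp add: adj_def)
qed

lemma pure_outer: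
  assumes "pure_state \<rho>"
  shows "\<exists>u::complex^2. \<rho> = outer u \<and> (\<Sum>i\<in>UNIV. u$i * cnj (u$i)) = 1"
proof -
  have H: "adj \<rho> = \<rho>" and I: "\<rho> ** \<rho> = \<rho>" and R: "rank \<rho> = 1"
    using assms unfolding pure_state_def by auto
  define a where "a = Re (\<rho>$1$1)"
  define d where "d = Re (\<rho>$2$2)"
  define z where "z = \<rho>$1$2"
  have ea: "\<rho>$1$1 = of_real a"
    using herm_entry[OF H, of 1 1] unfolding a_def by (simp add: complex_eq_iff)
  have ed: "\<rho>$2$2 = of_real d"
    using herm_entry[OF H, of 2 2] unfolding d_def by (simp add: complex_eq_iff)
  have ez: "\<rho>$2$1 = cnj z" using herm_entry[OF H, of 2 1] unfolding z_def .
  have I11: "(\<rho>**\<rho>)$1$1 = \<rho>$1$1" and I12: "(\<rho>**\<rho>)$1$2 = \<rho>$1$2"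
     and I22: "(\<rho>**\<rho>)$2$2 = \<rho>$2$2" using I by auto
  have zz: "z * cnj z = of_real ((cmod z)^2)" using complex_norm_square[of z] by simp
  have e1: "a*a + (cmod z)^2 = a"
  proof -
    have "of_real a * of_real a + z * cnj z = (of_real a :: complex)"
      using I11 by (simp add: matrix_matrix_mult_def sum_2 ea ez z_def[symmetric])
    then have "of_real (a*a + (cmod z)^2) = (of_real a :: complex)" by (simp add: zz)
    then show ?thesis using of_real_eq_iff by blast
  qed
  have e2: "d*d + (cmod z)^2 = d"
  proof -
    have "cnj z * z + of_real d * of_real d = (of_real d :: complex)"
      using I22 by (simp add: matrix_matrix_mult_def sum_2 ed ez z_def[symmetric])
    then have "of_real (d*d + (cmod z)^2) = (of_real d :: complex)" by (simp add: zz mult.commute add.commute)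
    then show ?thesis using of_real_eq_iff by blast
  qed
  have z12: "\<rho>$1$2 = z" by (simp add: z_def)
  have e3: "z * of_real (a + d) = z"
  proof -
    have "of_real a * z + z * of_real d = z"
      using I12 by (simp add: matrix_matrix_mult_def sum_2 ea ed z12)
    then show ?thesis by (simp add: algebra_simps)
  qed
  have tr: "a + d = 1"
  proof (cases "z = 0")
    case False
    then have "of_real (a+d) = (1::complex)" using e3
      by (metis mult.right_neutral mult_left_cancel)
    then show ?thesis by (metis of_real_eq_1_iff)
  next
    case True
    have "a*(a-1) = 0" "d*(d-1)=0" using e1 e2 True by (simp_all add: algebra_simps)
    then have "a = 0 \<or> a = 1" "d = 0 \<or> d = 1" by auto
    moreover have "\<not> (a = 0 \<and> d = 0)"
    proof
      assume "a = 0 \<and> d = 0"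
      then have "\<rho> = 0" using True
        by (intro mat2_eqI) (auto simp: ea ed ez z12)
      then show False using R rank0 by simp
    qed
    moreover have "\<not> (a = 1 \<and> d = 1)"
    proof
      assume "a = 1 \<and> d = 1"
      then have "\<rho> = mat 1" using True
        by (intro mat2_eqI) (auto simp: ea ed ez z12 mat_def two_ne)
      then show False using R rankI by simp
    qed
    ultimately show ?thesis by auto
  qed
  show ?thesis
  proof (cases "a = 0")
    case True
    then have "z = 0" using e1 by simp
    define u :: "complex^2" where "u = (\<chi> i. if i = 1 then 0 else 1)"
    have "\<rho> = outer u"
      by (intro mat2_eqI) (auto simp: outer_def u_def ea ed ez z12 \<open>z = 0\<close> True two_ne tr[symmetric])
    moreover have "(\<Sum>i\<in>UNIV. u$i * cnj (u$i)) = 1" by (simp add: u_def sum_2 two_ne)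
    ultimately show ?thesis by blast
  next
    case False
    have "a*a \<ge> 0" by simp
    then have apos: "a > 0" using e1 False
      by (smt (verit) zero_le_power2)
    define s where "s = sqrt a"
    have s2: "s * s = a" "s > 0" using apos unfolding s_def by auto
    define u :: "complex^2" where "u = (\<chi> i. if i = 1 then of_real s else cnj z / of_real s)"
    have cz: "(cmod z)^2 = a*(1-a)" using e1 by (simp add: algebra_simps)
    have d1: "d = 1 - a" using tr by simp
    have czd: "(cmod z)^2 = a*d" using cz by (simp add: d1)
    have dz: "d = (cmod z)^2 / a" using apos by (simp add: czd)
    have "\<rho> = outer u"
    proof (intro mat2_eqI)
      fix i j :: 2 assume "i \<in> {1,2}" "j \<in> {1,2}"
      have c11: "\<rho> $ 1 $ 1 = outer u $ 1 $ 1"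
        using s2 by (simp add: outer_def u_def ea flip: of_real_mult)
      have c12: "\<rho> $ 1 $ 2 = outer u $ 1 $ 2"
        using s2 by (simp add: outer_def u_def z12 two_ne)
      have c21: "\<rho> $ 2 $ 1 = outer u $ 2 $ 1"
        using s2 by (simp add: outer_def u_def ez two_ne)
      have c22: "\<rho> $ 2 $ 2 = outer u $ 2 $ 2"
      proof -
        have "outer u $ 2 $ 2 = cnj z * z / (of_real s * of_real s)"
          by (simp add: outer_def u_def two_ne)
        also have "\<dots> = of_real ((cmod z)^2 / a)"
          using s2 by (simp add: zz mult.commute flip: of_real_mult)
        finally show ?thesis by (simp add: ed dz)
      qed
      show "\<rho> $ i $ j = outer u $ i $ j"
        using \<open>i \<in> {1,2}\<close> \<open>j \<in> {1,2}\<close> c11 c12 c21 c22 by auto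
    qed
    moreover have "(\<Sum>i\<in>UNIV. u$i * cnj (u$i)) = 1"
    proof -
      have "(\<Sum>i\<in>UNIV. u$i * cnj (u$i)) = of_real s * of_real s + cnj z * z / (of_real s * of_real s)"
        by (simp add: sum_2 u_def two_ne)
      also have "\<dots> = of_real (a + (cmod z)^2 / a)"
        using s2 by (simp add: zz mult.commute flip: of_real_mult)
      also have "\<dots> = 1" using tr dz by simp
      finally show ?thesis .
    qed
    ultimately show ?thesis by blast
  qed
qed



definition quad :: "complex^'n^'n \<Rightarrow> complex^'n \<Rightarrow> complex" where
  "quad P v = (\<Sum>i\<in>UNIV. \<Sum>j\<in>UNIV. cnj (v $ i) * P $ i $ j * v $ j)"

definition bil :: "complex^'n^'n \<Rightarrow> complex^'n \<Rightarrow> complex^'n \<Rightarrow> complex" where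
  "bil P v w = (\<Sum>i\<in>UNIV. \<Sum>j\<in>UNIV. cnj (v $ i) * P $ i $ j * w $ j)"

lemma psd_quad: "psd P \<Longrightarrow> Im (quad P v) = 0 \<and> Re (quad P v) \<ge> 0"
  unfolding psd_def quad_def Let_def by blast

lemma quad_expand:
  "quad P (x - of_real t *s y) = quad P x - of_real t * bil P x y - of_real t * bil P y x
     + of_real t * of_real t * quad P y"
  unfolding quad_def bil_def
  by (simp add: algebra_simps sum.distrib sum_subtractf sum_distrib_left)

lemma bil_mv: "bil P y x = (\<Sum>i\<in>UNIV. cnj (y $ i) * (P *v x) $ i)"
  unfolding bil_def matrix_vector_mult_def
  by (simp add: sum_distrib_left mult.assoc)

lemma bil_herm: assumes "adj P = P" shows "bil P x y = cnj (bil P y x)"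
proof -
  have hh: "\<And>i j. cnj (P$i$j) = P$j$i" by (rule sym, rule herm_entry[OF assms])
  have "cnj (bil P y x) = (\<Sum>i\<in>UNIV. \<Sum>j\<in>UNIV. y $ i * cnj (P $ i $ j) * cnj (x $ j))"
    unfolding bil_def cnj_sum by simp
  also have "\<dots> = (\<Sum>i\<in>UNIV. \<Sum>j\<in>UNIV. y $ i * P $ j $ i * cnj (x $ j))"
    by (simp only: hh)
  also have "\<dots> = (\<Sum>j\<in>UNIV. \<Sum>i\<in>UNIV. y $ i * P $ j $ i * cnj (x $ j))"
    by (rule sum.swap)
  also have "\<dots> = bil P x y"
    unfolding bil_def by (intro sum.cong refl) (simp add: mult.commute mult.left_commute)
  finally show ?thesis by simp
qed
lemma mcnj: "z * cnj z = (of_real (cmod z))^2"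
  by (metis complex_norm_square of_real_power)

lemma kernel:
  assumes H: "adj P = P" and S: "psd P" and Q0: "quad P x = 0"
  shows "P *v x = 0"
proof -
  define y where "y = P *v x"
  define cr where "cr = (\<Sum>i\<in>UNIV. (cmod (y $ i))^2)"
  have A: "bil P y x = of_real cr"
    unfolding bil_mv y_def[symmetric] cr_def
    by (simp add: mcnj mult.commute)
  have B: "bil P x y = of_real cr"
    using bil_herm[OF H, of x y] A by simp
  define Q where "Q = Re (quad P y)"
  have Qn: "Q \<ge> 0" and Qi: "Im (quad P y) = 0" using psd_quad[OF S, of y] unfolding Q_def by auto
  have qy: "quad P y = of_real Q" using Qi unfolding Q_def by (simp add: complex_eq_iff)
  have ineq: "0 \<le> - 2 * t * cr + t * t * Q" for t
  proof -
    have "Re (quad P (x - of_real t *s y)) \<ge> 0" using psd_quad[OF S] by blast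
    then show ?thesis
      unfolding quad_expand Q0 A B qy by (simp add: mult.commute mult.left_commute)
  qed
  have crn: "cr \<ge> 0" unfolding cr_def by (simp add: sum_nonneg)
  have "cr = 0"
  proof -
    define t where "t = cr / (Q + 1)"
    have tc: "cr = t*(Q+1)" using Qn by (simp add: t_def)
    have "0 \<le> - 2 * t * cr + t * t * Q" by (rule ineq)
    also have "\<dots> = - ((t*t)*(Q+2))" unfolding tc by (simp add: algebra_simps)
    finally have "(t*t)*(Q+2) \<le> 0" by simp
    moreover have "Q + 2 > 0" using Qn by simp
    ultimately have "t*t \<le> 0" by (simp add: mult_le_0_iff)
    then have "t = 0" by (simp add: mult_le_0_iff) linarith
    then show ?thesis using tc by simp
  qed
  then have "\<forall>i\<in>UNIV. (cmod (y $ i))^2 = 0"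
    unfolding cr_def by (subst sum_nonneg_eq_0_iff[symmetric]) auto
  then show ?thesis unfolding y_def[symmetric] by (simp add: vec_eq_iff)
qed


lemma PK0:
  fixes P K :: "complex^'n^'n"
  assumes H: "adj P = P" and S: "psd P" and HK: "adj K = K" and IK: "K ** K = K"
    and T: "trace (P ** K) = 0"
  shows "P ** K = 0"
proof -
  define x where "x p = (\<chi> i. K $ i $ p)" for p
  have hk: "\<And>i j. cnj (K$i$j) = K$j$i" by (rule sym, rule herm_entry[OF HK])
  have qx: "quad P (x p) = (K ** P ** K) $ p $ p" for p
  proof -
    have "quad P (x p) = (\<Sum>i\<in>UNIV. \<Sum>j\<in>UNIV. K $ p $ i * P $ i $ j * K $ j $ p)"
      unfolding quad_def x_def by (simp add: hk)
    also have "\<dots> = (\<Sum>j\<in>UNIV. \<Sum>i\<in>UNIV. K $ p $ i * P $ i $ j * K $ j $ p)"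
      by (rule sum.swap)
    also have "\<dots> = (K ** P ** K) $ p $ p"
      by (simp add: matrix_matrix_mult_def sum_distrib_right)
    finally show ?thesis .
  qed
  have "(\<Sum>p\<in>UNIV. quad P (x p)) = trace (K ** P ** K)"
    by (simp add: qx trace_def)
  also have "\<dots> = trace (K ** (K ** P))" by (rule trace_mul_sym)
  also have "\<dots> = trace (K ** P)" by (simp add: matrix_mul_assoc IK)
  also have "\<dots> = 0" using T trace_mul_sym by metis
  finally have sum0: "(\<Sum>p\<in>UNIV. quad P (x p)) = 0" .
  then have "(\<Sum>p\<in>UNIV. Re (quad P (x p))) = 0"
    by (metis Re_sum zero_complex.simps(1))
  then have "\<forall>p\<in>UNIV. Re (quad P (x p)) = 0"
    by (subst sum_nonneg_eq_0_iff[symmetric]) (auto simp: psd_quad[OF S])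
  then have "quad P (x p) = 0" for p using psd_quad[OF S, of "x p"] by (simp add: complex_eq_iff)
  then have "P *v x p = 0" for p by (rule kernel[OF H S])
  then show ?thesis
    unfolding vec_eq_iff by (auto simp: matrix_matrix_mult_def matrix_vector_mult_def x_def)
qed


lemma mm_diff_l: "(A::complex^'n^'n) ** (B - C) = A ** B - A ** C"
  by (simp add: matrix_matrix_mult_def vec_eq_iff sum_subtractf algebra_simps)

lemma mm_diff_r: "((B::complex^'n^'n) - C) ** A = B ** A - C ** A"
  by (simp add: matrix_matrix_mult_def vec_eq_iff sum_subtractf algebra_simps)

lemma adj_mult: "adj ((A::complex^'n^'n) ** B) = adj B ** adj A"
  by (simp add: adj_def matrix_matrix_mult_def vec_eq_iff mult.commute)

lemma adj_mat1: "adj (mat 1 :: complex^'n^'n) = mat 1"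
  by (simp add: adj_def mat_def vec_eq_iff)

lemma adj_diff: "adj ((A::complex^'n^'n) - B) = adj A - adj B"
  by (simp add: adj_def vec_eq_iff)

lemma adj_kron: "adj (kron A B) = kron (adj A) (adj B)"
  by (simp add: adj_def kron_def vec_eq_iff)

lemma kron_diff_l: "kron (A - B) C = kron A C - kron B C"
  by (simp add: kron_def vec_eq_iff algebra_simps)

lemma kron_diff_r: "kron C (A - B) = kron C A - kron C B"
  by (simp add: kron_def vec_eq_iff algebra_simps)

lemma kron_11: "kron (mat 1 :: complex^'a^'a) (mat 1 :: complex^'b^'b) = mat 1"
  by (simp add: kron_def mat_def vec_eq_iff prod_eq_iff)

lemma kron_mult: "kron (A::op2) (B::op2) ** kron (C::op2) (D::op2) = kron (A ** C) (B ** D)"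
  by (simp add: kron_def matrix_matrix_mult_def vec_eq_iff sum_pairs sum_2 algebra_simps)

lemma tr_kron_l: "trace ((P::op4) ** kron Q (mat 1)) = trace (ptrace2 P ** Q)"
  by (simp add: trace_def kron_def matrix_matrix_mult_def ptrace2_def mat_def sum_pairs sum_2 two_ne algebra_simps)

lemma tr_kron_r: "trace ((P::op4) ** kron (mat 1) Q) = trace (ptrace1 P ** Q)"
  by (simp add: trace_def kron_def matrix_matrix_mult_def ptrace1_def mat_def sum_pairs sum_2 two_ne algebra_simps)

lemma adj_outer: "adj (outer u) = outer u"
  by (simp add: adj_def outer_def vec_eq_iff mult.commute)

lemma outer_idem: "(\<Sum>i\<in>UNIV. u$i * cnj (u$i)) = 1 \<Longrightarrow> outer u ** outer u = outer u"
proof -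
  assume n: "(\<Sum>i\<in>UNIV. u$i * cnj (u$i)) = 1"
  have "(outer u ** outer u) $ a $ b = outer u $ a $ b" for a b
  proof -
    have "(outer u ** outer u) $ a $ b = u$a * cnj (u$b) * (\<Sum>i\<in>UNIV. u$i * cnj (u$i))"
      by (simp add: outer_def matrix_matrix_mult_def sum_distrib_left mult_ac)
    then show ?thesis using n by (simp add: outer_def)
  qed
  then show ?thesis by (simp add: vec_eq_iff)
qed

lemma transpose_outer: "transpose (outer v) = outer (\<chi> i. cnj (v$i))"
  by (simp add: transpose_def outer_def vec_eq_iff mult.commute)

lemma kron_outer: "kron (outer u) (outer w) = outer (\<chi> p. u $ fst p * w $ snd p)"
  by (simp add: kron_def outer_def vec_eq_iff mult_ac)

lemma trace_outer: "trace (outer u) = (\<Sum>i\<in>UNIV. u$i * cnj (u$i))"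
  by (simp add: trace_def outer_def)

lemma psd_outer: "psd (outer (x::complex^'n))"
  unfolding psd_def Let_def
proof (intro allI)
  fix v :: "complex^'n"
  define s where "s = (\<Sum>i\<in>UNIV. cnj (v$i) * x$i)"
  have "(\<Sum>i\<in>UNIV. \<Sum>j\<in>UNIV. cnj (v $ i) * outer x $ i $ j * v $ j) = s * cnj s"
    unfolding s_def by (simp add: outer_def sum_product mult_ac) (rule sum.swap)
  also have "\<dots> = of_real ((cmod s)^2)" using complex_norm_square by simp
  finally show "Im (\<Sum>i\<in>UNIV. \<Sum>j\<in>UNIV. cnj (v $ i) * outer x $ i $ j * v $ j) = 0 \<and>
        0 \<le> Re (\<Sum>i\<in>UNIV. \<Sum>j\<in>UNIV. cnj (v $ i) * outer x $ i $ j * v $ j)" by simp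
qed

lemma sandwich: "outer y ** P ** outer y = (\<chi> a b. quad P y * outer y $ a $ b)"
proof -
  have "(outer y ** P ** outer y) $ a $ b = quad P y * outer y $ a $ b" for a b
    by (simp add: outer_def matrix_matrix_mult_def quad_def sum_distrib_left sum_distrib_right mult_ac) (rule sum.swap)
  then show ?thesis by (simp add: vec_eq_iff)
qed

lemma ptrace2_kron: "ptrace2 (kron A B) = (\<chi> i j. A$i$j * trace B)"
  by (simp add: ptrace2_def kron_def trace_def vec_eq_iff sum_distrib_left)

lemma ptrace1_kron: "ptrace1 (kron A B) = (\<chi> i j. trace A * B$i$j)"
  by (simp add: ptrace1_def kron_def trace_def vec_eq_iff sum_distrib_right)


lemma idem_compl:
  fixes W :: "complex^'n^'n"
  assumes "W ** W = W" shows "(mat 1 - W) ** (mat 1 - W) = mat 1 - W"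
  using assms by (simp add: mm_diff_l mm_diff_r)

lemma couplings_unique:
  fixes u v :: "complex^2"
  assumes nu: "(\<Sum>i\<in>UNIV. u$i * cnj (u$i)) = 1" and nv: "(\<Sum>i\<in>UNIV. v$i * cnj (v$i)) = 1"
    and P: "P \<in> couplings (outer v) (outer u)"
  shows "P = kron (outer u) (transpose (outer v))"
proof -
  define W where "W = outer u"
  define v' where "v' = (\<chi> i. cnj (v$i))"
  define S where "S = outer v'"
  have St: "transpose (outer v) = S" unfolding S_def v'_def by (rule transpose_outer)
  have nv': "(\<Sum>i\<in>UNIV. v'$i * cnj (v'$i)) = 1" using nv by (simp add: v'_def mult.commute)
  have H: "adj P = P" and Ps: "psd P" and tP: "trace P = 1"
    and p2: "ptrace2 P = W" and p1: "ptrace1 P = S"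
    using P unfolding couplings_def density_def W_def St by auto
  have WW: "W ** W = W" and SS: "S ** S = S" using outer_idem nu nv' unfolding W_def S_def by auto
  have aW: "adj W = W" and aS: "adj S = S" unfolding W_def S_def by (rule adj_outer)+
  define K1 where "K1 = kron (mat 1 - W) (mat 1 :: op2)"
  have aK1: "adj K1 = K1" unfolding K1_def adj_kron adj_diff adj_mat1 aW ..
  have iK1: "K1 ** K1 = K1" unfolding K1_def by (simp add: kron_mult idem_compl[OF WW])
  have tK1: "trace (P ** K1) = 0"
    unfolding K1_def tr_kron_l p2 using WW by (simp add: mm_diff_l trace_0[simplified])
  have PK1: "P ** K1 = 0" by (rule PK0[OF H Ps aK1 iK1 tK1])
  have P1: "P ** kron W (mat 1) = P"
  proof -
    have "kron W (mat 1) = mat 1 - K1" unfolding K1_def kron_diff_l kron_11 by simp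
    then show ?thesis using PK1 by (simp add: mm_diff_l)
  qed
  define K2 where "K2 = kron (mat 1 :: op2) (mat 1 - S)"
  have aK2: "adj K2 = K2" unfolding K2_def adj_kron adj_diff adj_mat1 aS ..
  have iK2: "K2 ** K2 = K2" unfolding K2_def by (simp add: kron_mult idem_compl[OF SS])
  have tK2: "trace (P ** K2) = 0"
    unfolding K2_def tr_kron_r p1 using SS by (simp add: mm_diff_l trace_0[simplified])
  have PK2: "P ** K2 = 0" by (rule PK0[OF H Ps aK2 iK2 tK2])
  have P2: "P ** kron (mat 1) S = P"
  proof -
    have "kron (mat 1) S = mat 1 - K2" unfolding K2_def kron_diff_r kron_11 by simp
    then show ?thesis using PK2 by (simp add: mm_diff_l)
  qed
  define R where "R = kron W S"
  have PR: "P ** R = P"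
  proof -
    have "P ** R = P ** (kron W (mat 1) ** kron (mat 1) S)" unfolding R_def kron_mult by simp
    also have "\<dots> = P" by (simp add: matrix_mul_assoc P1 P2)
    finally show ?thesis .
  qed
  have aR: "adj R = R" unfolding R_def adj_kron aW aS ..
  have RP: "R ** P = P" using arg_cong[OF PR, of adj] unfolding adj_mult aR H .
  define y where "y = (\<chi> p. u $ fst p * v' $ snd p)"
  have Ry: "R = outer y" unfolding R_def W_def S_def y_def by (rule kron_outer)
  have "trace R = (\<Sum>i\<in>UNIV. u$i * cnj (u$i)) * (\<Sum>i\<in>UNIV. v'$i * cnj (v'$i))"
    unfolding R_def W_def S_def trace_def kron_def
    by (simp add: outer_def sum_pairs sum_2 algebra_simps)
  then have tR: "trace R = 1" using nu nv' by simp
  have "P = R ** P ** R" using PR RP by simp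
  also have "\<dots> = (\<chi> a b. quad P y * R $ a $ b)" unfolding Ry by (rule sandwich)
  finally have Pc: "P = (\<chi> a b. quad P y * R $ a $ b)" .
  have "trace P = quad P y * trace R"
    by (subst Pc) (simp add: trace_def sum_distrib_left)
  then have "quad P y = 1" using tP tR by simp
  then have "P = R" using Pc by (simp add: vec_eq_iff)
  then show ?thesis unfolding R_def W_def St .
qed


lemma R_coupling:
  fixes u v :: "complex^2"
  assumes nu: "(\<Sum>i\<in>UNIV. u$i * cnj (u$i)) = 1" and nv: "(\<Sum>i\<in>UNIV. v$i * cnj (v$i)) = 1"
  shows "kron (outer u) (transpose (outer v)) \<in> couplings (outer v) (outer u)"
proof -
  define v' where "v' = (\<chi> i. cnj (v$i))"
  have St: "transpose (outer v) = outer v'" unfolding v'_def by (rule transpose_outer)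
  have nv': "(\<Sum>i\<in>UNIV. v'$i * cnj (v'$i)) = 1" using nv by (simp add: v'_def mult.commute)
  have R: "kron (outer u) (outer v') = outer (\<chi> p. u $ fst p * v' $ snd p)" by (rule kron_outer)
  have "trace (kron (outer u) (outer v')) = (\<Sum>i\<in>UNIV. u$i * cnj (u$i)) * (\<Sum>i\<in>UNIV. v'$i * cnj (v'$i))"
    unfolding trace_def kron_def
    by (simp add: outer_def sum_pairs sum_2 algebra_simps)
  then have tR: "trace (kron (outer u) (outer v')) = 1" using nu nv' by simp
  have "density (kron (outer u) (outer v'))"
    unfolding density_def R using tR R by (simp add: adj_outer psd_outer)
  moreover have "ptrace2 (kron (outer u) (outer v')) = outer u"
    using nv' by (simp add: ptrace2_kron trace_outer vec_eq_iff)
  moreover have "ptrace1 (kron (outer u) (outer v')) = outer v'"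
    using nu by (simp add: ptrace1_kron trace_outer vec_eq_iff)
  ultimately show ?thesis unfolding couplings_def St by simp
qed

lemma Dsym2_outer:
  fixes u v :: "complex^2"
  assumes nu: "(\<Sum>i\<in>UNIV. u$i * cnj (u$i)) = 1" and nv: "(\<Sum>i\<in>UNIV. v$i * cnj (v$i)) = 1"
  shows "Dsym2 (outer v) (outer u) = Re (trace (kron (outer u) (transpose (outer v)) ** Csym))"
proof -
  have "couplings (outer v) (outer u) = {kron (outer u) (transpose (outer v))}"
    using R_coupling[OF nu nv] couplings_unique[OF nu nv] by blast
  then show ?thesis unfolding Dsym2_def by simp
qed

lemma trace_Csym: "trace (kron (A::op2) (transpose B) ** Csym) = 8 * trace A * trace B - 4 * trace (A ** B)"
  by (simp add: trace_def matrix_matrix_mult_def Csym_explicit Fm_def sum_pairs sum_2 kron_def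
      transpose_def two_ne algebra_simps)


lemma herm2:
  assumes "adj A = (A::op2)"
  shows "A$1$1 = of_real (Re (A$1$1))" "A$2$2 = of_real (Re (A$2$2))" "A$2$1 = cnj (A$1$2)"
  using herm_entry[OF assms, of 1 1] herm_entry[OF assms, of 2 2] herm_entry[OF assms, of 2 1]
  by (simp_all add: complex_eq_iff)

lemma three_ne: "(3::3) \<noteq> 1" "(3::3) \<noteq> 2" "(2::3) \<noteq> 1" by simp_all

lemma bloch_dot:
  assumes "adj A = (A::op2)" "adj B = (B::op2)"
  shows "bloch A \<bullet> bloch B = 2 * Re (trace (A ** B)) - Re (trace A) * Re (trace B)"
proof -
  note hA = herm2[OF assms(1)] and hB = herm2[OF assms(2)]
  define a1 where "a1 = Re (A$1$1)"
  define a2 where "a2 = Re (A$2$2)"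
  define b1 where "b1 = Re (B$1$1)"
  define b2 where "b2 = Re (B$2$2)"
  define z where "z = A$1$2"
  define w where "w = B$1$2"
  have eA: "A$1$1 = of_real a1" "A$2$2 = of_real a2" "A$2$1 = cnj z" "A$1$2 = z"
    using hA unfolding a1_def a2_def z_def by auto
  have eB: "B$1$1 = of_real b1" "B$2$2 = of_real b2" "B$2$1 = cnj w" "B$1$2 = w"
    using hB unfolding b1_def b2_def w_def by auto
  show ?thesis
    by (simp add: inner_vec_def sum_3 bloch_def three_ne pauli_def trace_def matrix_matrix_mult_def
        sum_2 two_ne eA eB algebra_simps)
qed


theorem mainTheorem3:
  fixes \<rho> \<omega> :: op2
  assumes "pure_state \<rho>" and "pure_state \<omega>"
  shows "Dsym2 \<rho> \<omega> = 6 - 2 * (bloch \<rho> \<bullet> bloch \<omega>)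
     \<and> Dsym2 \<rho> \<rho> = 4
     \<and> dsym \<rho> \<omega> = norm (bloch \<rho> - bloch \<omega>)"
proof -
  obtain v where rv: "\<rho> = outer v" and nv: "(\<Sum>i\<in>UNIV. v$i * cnj (v$i)) = 1"
    using pure_outer[OF assms(1)] by blast
  obtain u where wu: "\<omega> = outer u" and nu: "(\<Sum>i\<in>UNIV. u$i * cnj (u$i)) = 1"
    using pure_outer[OF assms(2)] by blast
  have tr: "trace \<rho> = 1" "trace \<omega> = 1" using nu nv rv wu trace_outer by metis+
  have idr: "\<rho> ** \<rho> = \<rho>" and idw: "\<omega> ** \<omega> = \<omega>"
    using outer_idem nu nv rv wu by auto
  have ar: "adj \<rho> = \<rho>" and aw: "adj \<omega> = \<omega>" using rv wu adj_outer by auto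
  have D: "Dsym2 \<rho> \<omega> = 8 - 4 * Re (trace (\<omega> ** \<rho>))"
    using Dsym2_outer[OF nu nv] trace_Csym[of \<omega> \<rho>] tr rv wu by simp
  have Drr: "Dsym2 \<rho> \<rho> = 4"
    using Dsym2_outer[OF nv nv] trace_Csym[of \<rho> \<rho>] tr rv idr by simp
  have Dww: "Dsym2 \<omega> \<omega> = 4"
    using Dsym2_outer[OF nu nu] trace_Csym[of \<omega> \<omega>] tr wu idw by simp
  have b: "bloch \<rho> \<bullet> bloch \<omega> = 2 * Re (trace (\<omega> ** \<rho>)) - 1"
    using bloch_dot[OF ar aw] tr trace_mul_sym[of \<rho> \<omega>] by simp
  have brr: "bloch \<rho> \<bullet> bloch \<rho> = 1" using bloch_dot[OF ar ar] tr idr by simp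
  have bww: "bloch \<omega> \<bullet> bloch \<omega> = 1" using bloch_dot[OF aw aw] tr idw by simp
  have D1: "Dsym2 \<rho> \<omega> = 6 - 2 * (bloch \<rho> \<bullet> bloch \<omega>)" using D b by simp
  have "norm (bloch \<rho> - bloch \<omega>) = sqrt (2 - 2 * (bloch \<rho> \<bullet> bloch \<omega>))"
    unfolding norm_eq_sqrt_inner
    by (simp add: inner_diff_left inner_diff_right brr bww inner_commute)
  moreover have "dsym \<rho> \<omega> = sqrt (2 - 2 * (bloch \<rho> \<bullet> bloch \<omega>))"
    unfolding dsym_def D1 Drr Dww by simp
  ultimately show ?thesis using D1 Drr by simp
qed


end
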